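(* Let $(X,d)$ be a $\delta$-Gromov hyperbolic space, $p\in X$, $\epsilon>0$, and $X^\epsilon=(X,d_\epsilon)$ the uniformized space. If the Gehring-Hayman property for metric boundary points holds for $X^\epsilon$, then the Gehring-Hayman property for Gromov sequences holds for $X^\epsilon$.
   Context: Gromov product $(x|y)_p=\frac12(d(p,x)+d(p,y)-d(x,y))$. $\delta$-Gromov hyperbolic: unbounded, proper, geodesic, and $(x|z)_p\ge\min\{(x|y)_p,(y|z)_p\}-\delta$ for all $x,y,z,p$. Uniformized metric: $d_\epsilon(x,y)=\inf_\gamma\int_\gamma e^{-\epsilon d(p,z)}ds(z)$ over $d$-rectifiable curves from $x$ to $y$; $l_{d_\epsilon}$ is length with respect to $d_\epsilon$; $\partial_{d_\epsilon}X^\epsilon=\overline{X^\epsilon}\setminus X^\epsilon$ (closure in the completion); $[x,y]$ denotes a $d$-geodesic. A Gromov sequence is $(x_n)$ with $(x_n|x_m)_p\to\infty$ as $n,m\to\infty$. GH property for Gromov sequences: for each Gromov sequence $(x_n)$ there is $C\ge1$ with $l_{d_\epsilon}([x_n,x_m])\le Cd_\epsilon(x_n,x_m)$ for all $n,m$. GH property for metric boundary points: for every $x\in\partial_{d_\epsilon}X^\epsilon$ and every $(x_n)\subseteq X$ with $d_\epsilon(x_n,x)\to0$ there is $C\ge1$ with $l_{d_\epsilon}([x_n,x_m])\le Cd_\epsilon(x_n,x_m)$ for all $n,m$. *)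

theory Defs
  imports "HOL-Analysis.Analysis"
begin

text \<open>The space X is the whole carrier of a type of class metric_space, with d = dist.\<close>

definition gromov_product :: "'a::metric_space \<Rightarrow> 'a \<Rightarrow> 'a \<Rightarrow> real" where
  "gromov_product p x y = (dist p x + dist p y - dist x y) / 2"

definition is_geodesic :: "(real \<Rightarrow> 'a::metric_space) \<Rightarrow> 'a \<Rightarrow> 'a \<Rightarrow> bool" where
  "is_geodesic g x y \<longleftrightarrow> g 0 = x \<and> g (dist x y) = y \<and>
     (\<forall>s\<in>{0..dist x y}. \<forall>t\<in>{0..dist x y}. dist (g s) (g t) = \<bar>s - t\<bar>)"

definition geodesic_space :: "'a::metric_space itself \<Rightarrow> bool" where
  "geodesic_space _ \<longleftrightarrow> (\<forall>x y::'a. \<exists>g. is_geodesic g x y)"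

definition proper_space :: "'a::metric_space itself \<Rightarrow> bool" where
  "proper_space _ \<longleftrightarrow> (\<forall>(x::'a) r. compact (cball x r))"

definition gromov_hyperbolic :: "'a::metric_space itself \<Rightarrow> real \<Rightarrow> bool" where
  "gromov_hyperbolic T \<delta> \<longleftrightarrow>
     \<not> bounded (UNIV :: 'a set) \<and> proper_space T \<and> geodesic_space T \<and>
     (\<forall>x y z p :: 'a. gromov_product p x z \<ge>
         min (gromov_product p x y) (gromov_product p y z) - \<delta>)"

definition curve_length_on ::
    "('a \<Rightarrow> 'a \<Rightarrow> real) \<Rightarrow> (real \<Rightarrow> 'a) \<Rightarrow> real \<Rightarrow> real \<Rightarrow> ereal" where
  "curve_length_on D g a b =
     (SUP ts \<in> {ts. sorted ts \<and> set ts \<subseteq> {a..b}}.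
        ereal (sum_list (map (\<lambda>(s, t). D (g s) (g t)) (zip ts (tl ts)))))"

definition rectifiable :: "(real \<Rightarrow> 'a::metric_space) \<Rightarrow> bool" where
  "rectifiable g \<longleftrightarrow> path g \<and> curve_length_on dist g 0 1 < \<infinity>"

definition arclength_fun :: "(real \<Rightarrow> 'a::metric_space) \<Rightarrow> real \<Rightarrow> real" where
  "arclength_fun g t = real_of_ereal (curve_length_on dist g 0 (min 1 t))"

definition line_integral :: "('a::metric_space \<Rightarrow> real) \<Rightarrow> (real \<Rightarrow> 'a) \<Rightarrow> real" where
  "line_integral \<rho> g = (LINT t:{0..1}|interval_measure (arclength_fun g). \<rho> (g t))"

definition uniformized :: "real \<Rightarrow> 'a::metric_space \<Rightarrow> 'a \<Rightarrow> 'a \<Rightarrow> real" where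
  "uniformized \<epsilon> p x y =
     (INF g \<in> {g. rectifiable g \<and> pathstart g = x \<and> pathfinish g = y}.
        line_integral (\<lambda>z. exp (- \<epsilon> * dist p z)) g)"

definition gromov_sequence :: "'a::metric_space \<Rightarrow> (nat \<Rightarrow> 'a) \<Rightarrow> bool" where
  "gromov_sequence p xs \<longleftrightarrow>
     (\<forall>M. \<exists>N. \<forall>n\<ge>N. \<forall>m\<ge>N. gromov_product p (xs n) (xs m) \<ge> M)"

definition GH_bound :: "real \<Rightarrow> 'a::metric_space \<Rightarrow> (nat \<Rightarrow> 'a) \<Rightarrow> real \<Rightarrow> bool" where
  "GH_bound \<epsilon> p xs C \<longleftrightarrow>
     (\<forall>n m g. is_geodesic g (xs n) (xs m) \<longrightarrow>
        curve_length_on (uniformized \<epsilon> p) g 0 (dist (xs n) (xs m))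
          \<le> ereal (C * uniformized \<epsilon> p (xs n) (xs m)))"

definition GH_gromov_sequences :: "real \<Rightarrow> 'a::metric_space \<Rightarrow> bool" where
  "GH_gromov_sequences \<epsilon> p \<longleftrightarrow>
     (\<forall>xs. gromov_sequence p xs \<longrightarrow> (\<exists>C\<ge>1. GH_bound \<epsilon> p xs C))"

text \<open>Sequences in X converging in the completion of (X,d_eps) to a point of the metric
  boundary are exactly the d_eps-Cauchy sequences with no d_eps-limit in X.\<close>
definition converges_to_metric_boundary :: "real \<Rightarrow> 'a::metric_space \<Rightarrow> (nat \<Rightarrow> 'a) \<Rightarrow> bool" where
  "converges_to_metric_boundary \<epsilon> p xs \<longleftrightarrow>
     (\<forall>e>0. \<exists>N. \<forall>n\<ge>N. \<forall>m\<ge>N. uniformized \<epsilon> p (xs n) (xs m) < e) \<and>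
     \<not> (\<exists>x. (\<lambda>n. uniformized \<epsilon> p (xs n) x) \<longlonglongrightarrow> 0)"

definition GH_metric_boundary :: "real \<Rightarrow> 'a::metric_space \<Rightarrow> bool" where
  "GH_metric_boundary \<epsilon> p \<longleftrightarrow>
     (\<forall>xs. converges_to_metric_boundary \<epsilon> p xs \<longrightarrow> (\<exists>C\<ge>1. GH_bound \<epsilon> p xs C))"

end

theory Submission
  imports Defs
begin


fun csum :: "(real \<Rightarrow> real \<Rightarrow> real) \<Rightarrow> real list \<Rightarrow> real" where
  "csum E [] = 0"
| "csum E [x] = 0"
| "csum E (x # y # zs) = E x y + csum E (y # zs)"

lemma csum_zip:
  "sum_list (map (\<lambda>(s, t). D (g s) (g t)) (zip ts (tl ts))) = csum (\<lambda>s t. D (g s) (g t)) ts"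
  by (induction "\<lambda>s t. D (g s) (g t)" ts rule: csum.induct) auto

lemma CL_def':
  "curve_length_on D g a b = (SUP ts \<in> {ts. sorted ts \<and> set ts \<subseteq> {a..b}}. ereal (csum (\<lambda>s t. D (g s) (g t)) ts))"
  unfolding curve_length_on_def csum_zip ..

lemma csum_append:
  "csum E (xs @ y # ys) = csum E (xs @ [y]) + csum E (y # ys)"
  by (induction E xs rule: csum.induct) auto

lemma csum_snoc:
  "xs \<noteq> [] \<Longrightarrow> csum E (xs @ [y]) = csum E xs + E (last xs) y"
  by (induction E xs rule: csum.induct) auto

lemma csum_nonneg:
  assumes "\<And>x y. E x y \<ge> 0" shows "csum E xs \<ge> 0"
  by (induction xs rule: induct_list012) (auto simp: assms add_nonneg_nonneg)

lemma csum_split: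
  assumes nn: "\<And>x y. E x y \<ge> 0" and tri: "\<And>x y z. E x z \<le> E x y + E y z"
  shows "csum E (xs @ ys) \<le> csum E (xs @ [a]) + csum E (a # ys)"
proof (cases "xs = []")
  case True
  then show ?thesis
  proof (cases ys)
    case (Cons v vs)
    have "csum E (v # vs) \<le> E a v + csum E (v # vs)" using nn by (simp add: add_increasing)
    then show ?thesis using True Cons by simp
  qed simp
next
  case False
  note xs = False
  show ?thesis
  proof (cases ys)
    case Nil
    then show ?thesis using csum_snoc[OF xs, of E a] nn[of "last xs" a] by simp
  next
    case (Cons v vs)
    obtain xs' u where xsu: "xs = xs' @ [u]" using xs by (metis rev_exhaust)
    have "csum E (xs @ ys) = csum E (xs' @ [u]) + csum E (u # v # vs)"
      using csum_append[of E xs' u "v # vs"] xsu Cons by simp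
    also have "\<dots> = csum E (xs' @ [u]) + E u v + csum E (v # vs)" by simp
    also have "\<dots> \<le> csum E (xs' @ [u]) + E u a + (E a v + csum E (v # vs))" using tri[of u v a] by simp
    also have "\<dots> = csum E (xs @ [a]) + csum E (a # ys)"
      using csum_append[of E xs' u "[a]"] xsu Cons by simp
    finally show ?thesis .
  qed
qed



lemma CL_ge:
  "sorted ts \<Longrightarrow> set ts \<subseteq> {a..b} \<Longrightarrow> ereal (csum (\<lambda>s t. D (g s) (g t)) ts) \<le> curve_length_on D g a b"
  unfolding CL_def' by (rule SUP_upper) auto

lemma CL_le:
  "(\<And>ts. sorted ts \<Longrightarrow> set ts \<subseteq> {a..b} \<Longrightarrow> csum (\<lambda>s t. D (g s) (g t)) ts \<le> M) \<Longrightarrow> curve_length_on D g a b \<le> ereal M"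
  unfolding CL_def' by (rule SUP_least) auto

lemma CL_nonneg: "0 \<le> curve_length_on D g a b"
  using CL_ge[of "[]" a b D g] by (simp add: zero_ereal_def)

lemma CL_mono: "b \<le> b' \<Longrightarrow> curve_length_on D g a b \<le> curve_length_on D g a b'"
  unfolding CL_def' by (rule SUP_subset_mono) auto

lemma CL_empty: "b < a \<Longrightarrow> curve_length_on D g a b = 0"
proof -
  assume "b < a"
  then have "{ts. sorted ts \<and> set ts \<subseteq> {a..b}} = {[]}" by auto
  then show ?thesis unfolding CL_def' by (simp add: zero_ereal_def)
qed

lemma CL_approx:
  assumes "curve_length_on D g a b = ereal r" "\<delta> > 0"
  shows "\<exists>ts. sorted ts \<and> set ts \<subseteq> {a..b} \<and> csum (\<lambda>s t. D (g s) (g t)) ts > r - \<delta>"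
proof -
  have "ereal (r - \<delta>) < curve_length_on D g a b" using assms by simp
  then obtain ts where "ts \<in> {ts. sorted ts \<and> set ts \<subseteq> {a..b}}"
      "ereal (r - \<delta>) < ereal (csum (\<lambda>s t. D (g s) (g t)) ts)"
    unfolding CL_def' less_SUP_iff by blast
  then show ?thesis by auto
qed

lemma dist_csum_nonneg: "csum (\<lambda>s t. dist (g s) (g t)) xs \<ge> 0"
  by (rule csum_nonneg) simp

lemma dist_csum_split:
  "csum (\<lambda>s t. dist (g s) (g t)) (xs @ ys) \<le> csum (\<lambda>s t. dist (g s) (g t)) (xs @ [a]) + csum (\<lambda>s t. dist (g s) (g t)) (a # ys)"
  by (rule csum_split) (auto intro: dist_triangle)

lemma dist_csum_snoc_mono:
  "csum (\<lambda>s t. dist (g s) (g t)) us \<le> csum (\<lambda>s t. dist (g s) (g t)) (us @ [c])"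
  by (cases "us = []") (auto simp: csum_snoc)

definition AF where "AF g t = curve_length_on dist g 0 (min 1 t)"

lemma af_fin:
  assumes "rectifiable g"
  shows "ereal (arclength_fun g t) = curve_length_on dist g 0 (min 1 t)"
proof -
  have "curve_length_on dist g 0 (min 1 t) \<le> curve_length_on dist g 0 1" by (rule CL_mono) simp
  also have "\<dots> < \<infinity>" using assms unfolding rectifiable_def by simp
  finally have "curve_length_on dist g 0 (min 1 t) < \<infinity>" .
  moreover have "curve_length_on dist g 0 (min 1 t) \<ge> 0" by (rule CL_nonneg)
  ultimately have "\<bar>curve_length_on dist g 0 (min 1 t)\<bar> \<noteq> \<infinity>" by auto
  then show ?thesis unfolding arclength_fun_def by (simp add: ereal_real)
qed

lemma af_mono:
  assumes "rectifiable g" "x \<le> y"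
  shows "arclength_fun g x \<le> arclength_fun g y"
proof -
  have "ereal (arclength_fun g x) \<le> ereal (arclength_fun g y)"
    unfolding af_fin[OF assms(1)] using assms(2) by (intro CL_mono) simp
  then show ?thesis by simp
qed

lemma af_nonneg: "rectifiable g \<Longrightarrow> arclength_fun g x \<ge> 0"
proof -
  assume r: "rectifiable g"
  have "ereal 0 \<le> ereal (arclength_fun g x)" unfolding af_fin[OF r] using CL_nonneg zero_ereal_def by metis
  then show ?thesis by simp
qed

lemma af_neg: "rectifiable g \<Longrightarrow> x < 0 \<Longrightarrow> arclength_fun g x = 0"
proof -
  assume r: "rectifiable g" "x < 0"
  have "ereal (arclength_fun g x) = ereal 0" unfolding af_fin[OF r(1)] using r(2) by (simp add: CL_empty zero_ereal_def)
  then show ?thesis by simp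
qed

lemma af_super:
  assumes "rectifiable g" "0 \<le> c" "c \<le> b" "b \<le> 1" "sorted (c # vs)" "set vs \<subseteq> {..b}"
  shows "arclength_fun g c + csum (\<lambda>s t. dist (g s) (g t)) (c # vs) \<le> arclength_fun g b"
proof -
  let ?E = "\<lambda>s t. dist (g s) (g t)"
  have "curve_length_on dist g 0 c \<le> ereal (arclength_fun g b - csum ?E (c # vs))"
  proof (rule CL_le)
    fix us assume us: "sorted us" "set us \<subseteq> {0..c}"
    have "csum ?E us + csum ?E (c # vs) \<le> csum ?E (us @ [c]) + csum ?E (c # vs)"
      using dist_csum_snoc_mono by simp
    also have "\<dots> = csum ?E (us @ c # vs)" by (rule csum_append[symmetric])
    also have "ereal \<dots> \<le> curve_length_on dist g 0 b"
    proof (rule CL_ge)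
      show "sorted (us @ c # vs)" using us assms(5) by (force simp: sorted_append subset_iff intro: order_trans)
      show "set (us @ c # vs) \<subseteq> {0..b}" using us assms(2,3,5,6) by (auto simp: subset_iff)
    qed
    also have "\<dots> = ereal (arclength_fun g b)" using af_fin[OF assms(1), of b] assms(4) by simp
    finally show "csum ?E us \<le> arclength_fun g b - csum ?E (c # vs)" by simp
  qed
  then have "ereal (arclength_fun g c) \<le> ereal (arclength_fun g b - csum ?E (c # vs))"
    using af_fin[OF assms(1), of c] assms by simp
  then show ?thesis by simp
qed



lemma af_rcont_main:
  assumes r: "rectifiable g" and a: "0 \<le> a" "a < 1" and eta: "\<eta> > 0"
  shows "\<exists>\<delta>>0. arclength_fun g (a + \<delta>) - arclength_fun g a < \<eta>"
proof (rule ccontr)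
  let ?F = "arclength_fun g"
  let ?E = "\<lambda>s t. dist (g s) (g t)"
  assume "\<not> ?thesis"
  then have hyp: "?F a + \<eta> \<le> ?F b" if "a < b" "b \<le> 1" for b
    using that by (auto dest!: spec[of _ "b - a"])
  have cont: "continuous_on {0..1} g" using r unfolding rectifiable_def path_def by simp
  have finb: "ereal (?F b) = curve_length_on dist g 0 b" if "b \<le> 1" for b
    using af_fin[OF r, of b] that by simp
  have claim: "\<forall>b. a < b \<longrightarrow> b \<le> 1 \<longrightarrow> ?F a + real N * \<eta> / 2 \<le> ?F b" for N
  proof (induction N)
    case 0
    then show ?case using af_mono[OF r] by auto
  next
    case (Suc N)
    show ?case
    proof (intro allI impI)
      fix b assume b: "a < b" "b \<le> 1"
      obtain ts where ts: "sorted ts" "set ts \<subseteq> {0..b}" "csum ?E ts > ?F b - \<eta> / 4"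
        using CL_approx[OF finb[OF b(2), symmetric], of "\<eta> / 4"] eta by auto
      define ts1 where "ts1 = takeWhile (\<lambda>t. t \<le> a) ts"
      define ts2 where "ts2 = dropWhile (\<lambda>t. t \<le> a) ts"
      have tseq: "ts = ts1 @ ts2" unfolding ts1_def ts2_def by simp
      have ts1le: "\<forall>t\<in>set ts1. t \<le> a" unfolding ts1_def by (auto dest: set_takeWhileD)
      have s1: "set ts1 \<subseteq> set ts" "set ts2 \<subseteq> set ts" using tseq by (metis Un_upper1 Un_upper2 set_append)+
      have sorted12: "sorted ts1" "sorted ts2" using ts(1) tseq sorted_append by metis+
      have "csum ?E ts \<le> csum ?E (ts1 @ [a]) + csum ?E (a # ts2)"
        using dist_csum_split[of g ts1 ts2 a] tseq by simp
      moreover have "csum ?E (ts1 @ [a]) \<le> ?F a"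
      proof -
        have "ereal (csum ?E (ts1 @ [a])) \<le> curve_length_on dist g 0 a"
        proof (rule CL_ge)
          show "sorted (ts1 @ [a])" using sorted12 ts1le by (auto simp: sorted_append)
          show "set (ts1 @ [a]) \<subseteq> {0..a}" using ts1le s1 ts(2) a by auto
        qed
        also have "\<dots> = ereal (?F a)" using finb[of a] a by simp
        finally show ?thesis by simp
      qed
      ultimately have big: "csum ?E (a # ts2) > 3 * \<eta> / 4" using ts(3) hyp[OF b] by simp
      then have "ts2 \<noteq> []" using eta by auto
      then obtain t1 rest where t1: "ts2 = t1 # rest" by (cases ts2) auto
      have t1a: "a < t1" using hd_dropWhile[of "\<lambda>t. t \<le> a" ts] \<open>ts2 \<noteq> []\<close> t1
        unfolding ts2_def by simp
      have ts2b: "set ts2 \<subseteq> {0..b}" using s1 ts(2) by auto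
      then have t1b: "t1 \<le> b" using t1 by auto
      obtain d where d: "d > 0" "\<And>x'. x' \<in> {0..1} \<Longrightarrow> dist x' a < d \<Longrightarrow> dist (g x') (g a) < \<eta> / 4"
        using cont a eta unfolding continuous_on_iff by (metis atLeastAtMost_iff divide_pos_pos less_eq_real_def zero_less_numeral)
      define m where "m = min d (t1 - a)"
      define c where "c = a + m / 2"
      have m: "0 < m" "m \<le> t1 - a" "m \<le> d" using d(1) t1a unfolding m_def by auto
      have c1: "a < c" unfolding c_def using m by linarith
      have c2: "c < t1" unfolding c_def using m by linarith
      have "dist c a < d" unfolding c_def dist_real_def using m by auto
      note c = c1 c2
      have "dist c a < d" unfolding c_def dist_real_def using m by auto
      then have gc: "dist (g c) (g a) < \<eta> / 4" using d(2)[of c] c t1b b a by auto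
      have "csum ?E (a # ts2) = dist (g a) (g t1) + csum ?E ts2" using t1 by simp
      moreover have "csum ?E (c # ts2) = dist (g c) (g t1) + csum ?E ts2" using t1 by simp
      moreover have "dist (g a) (g t1) \<le> dist (g a) (g c) + dist (g c) (g t1)" by (rule dist_triangle)
      ultimately have cbig: "csum ?E (c # ts2) > \<eta> / 2" using big gc by (simp add: dist_commute)
      have "?F c + csum ?E (c # ts2) \<le> ?F b"
      proof (rule af_super[OF r])
        show "0 \<le> c" "c \<le> b" "b \<le> 1" using c a t1b b by auto
        show "sorted (c # ts2)" using sorted12(2) t1 c by auto
        show "set ts2 \<subseteq> {..b}" using ts2b by auto
      qed
      moreover have "?F a + real N * \<eta> / 2 \<le> ?F c" using Suc.IH c t1b b by auto
      ultimately show "?F a + real (Suc N) * \<eta> / 2 \<le> ?F b" using cbig by (simp add: field_simps)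
    qed
  qed
  define N where "N = nat \<lceil>2 * (?F 1 - ?F a) / \<eta>\<rceil> + 1"
  have "real N > 2 * (?F 1 - ?F a) / \<eta>" unfolding N_def by linarith
  then have "real N * \<eta> / 2 > ?F 1 - ?F a" using eta by (simp add: field_simps)
  moreover have "?F a + real N * \<eta> / 2 \<le> ?F 1" using claim[of N] a by auto
  ultimately show False by simp
qed

lemma af_rcont:
  assumes r: "rectifiable g"
  shows "continuous (at_right a) (arclength_fun g)"
proof (subst continuous_at_right_real_increasing)
  show "\<And>x y. x \<le> y \<Longrightarrow> arclength_fun g x \<le> arclength_fun g y" using af_mono[OF r] .
  show "\<forall>e>0. \<exists>d>0. arclength_fun g (a + d) - arclength_fun g a < e"
  proof (intro allI impI)
    fix e :: real assume e: "e > 0"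
    consider "a < 0" | "0 \<le> a" "a < 1" | "1 \<le> a" by linarith
    then show "\<exists>d>0. arclength_fun g (a + d) - arclength_fun g a < e"
    proof cases
      case 1
      then show ?thesis using af_neg[OF r, of a] af_neg[OF r, of "a + (- a / 2)"] e
        by (intro exI[of _ "- a / 2"]) auto
    next
      case 2
      then show ?thesis using af_rcont_main[OF r _ _ e] by auto
    next
      case 3
      then show ?thesis using e by (intro exI[of _ 1]) (auto simp: arclength_fun_def min_def)
    qed
  qed
qed



lemma af_measure:
  assumes r: "rectifiable g" "a \<le> b"
  shows "emeasure (interval_measure (arclength_fun g)) {a<..b} = arclength_fun g b - arclength_fun g a"
    "measure (interval_measure (arclength_fun g)) {a<..b} = arclength_fun g b - arclength_fun g a"
  using emeasure_interval_measure_Ioc[OF r(2) af_mono[OF r(1)] af_rcont[OF r(1)]]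
    measure_interval_measure_Ioc[OF r(2) af_mono[OF r(1)] af_rcont[OF r(1)]] by auto

lemma line_integral_integrable:
  fixes \<rho> :: "'a::metric_space \<Rightarrow> real"
  assumes r: "rectifiable g" and rho: "continuous_on UNIV \<rho>" "\<And>z. 0 \<le> \<rho> z" "\<And>z. \<rho> z \<le> 1"
  shows "integrable (interval_measure (arclength_fun g)) (\<lambda>t. indicator {0..1} t *\<^sub>R \<rho> (g t))"
proof (rule Bochner_Integration.integrable_bound[where f="indicator {-1<..1} :: real \<Rightarrow> real"])
  let ?M = "interval_measure (arclength_fun g)"
  show "integrable ?M (indicator {-1<..1} :: real \<Rightarrow> real)"
    by (rule integrable_real_indicator) (auto simp: af_measure[OF r])
  have cg: "continuous_on {0..1} g" using r unfolding rectifiable_def path_def by simp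
  have "continuous_on {0..1} (\<lambda>t. \<rho> (g t))"
    by (rule continuous_on_compose2[OF rho(1) cg]) auto
  then have "(\<lambda>t. indicator {0..1} t *\<^sub>R \<rho> (g t)) \<in> borel_measurable borel"
    by (intro borel_measurable_continuous_on_indicator) auto
  then show "(\<lambda>t. indicator {0..1} t *\<^sub>R \<rho> (g t)) \<in> borel_measurable ?M"
    by (simp add: measurable_cong_sets[OF sets_interval_measure refl])
  show "AE x in ?M. norm (indicator {0..1} x *\<^sub>R \<rho> (g x)) \<le> norm (indicator {-1<..1} x :: real)"
    using rho by (auto simp: indicator_def)
qed

lemma line_lower:
  fixes g :: "real \<Rightarrow> 'a::metric_space"
  assumes r: "rectifiable g" and u: "pathstart g = u" "pathfinish g = x" "dist u x \<ge> 1" and eps: "\<epsilon> > 0"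
  shows "exp (- \<epsilon> * (dist p x + 1)) \<le> line_integral (\<lambda>z. exp (- \<epsilon> * dist p z)) g"
proof -
  let ?M = "interval_measure (arclength_fun g)"
  let ?F = "arclength_fun g"
  let ?c = "exp (- \<epsilon> * (dist p x + 1))"
  define \<rho> where "\<rho> = (\<lambda>z. exp (- \<epsilon> * dist p z))"
  have cg: "continuous_on {0..1} g" using r unfolding rectifiable_def path_def by simp
  have g0: "g 0 = u" and g1: "g 1 = x" using u unfolding pathstart_def pathfinish_def by auto
  define S where "S = {t \<in> {0..1}. 1 \<le> dist (g t) x}"
  have "closed S" unfolding S_def
    by (intro continuous_on_closed_Collect_le continuous_on_dist cg continuous_on_const) auto
  moreover have "0 \<in> S" using g0 u(3) unfolding S_def by auto
  moreover have bdd: "bdd_above S" unfolding S_def by (auto intro: bdd_aboveI[of _ 1])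
  ultimately have t0S: "Sup S \<in> S" by (intro closed_contains_Sup) auto
  define t0 where "t0 = Sup S"
  have t0: "0 \<le> t0" "t0 \<le> 1" "1 \<le> dist (g t0) x" using t0S unfolding t0_def S_def by auto
  have after: "dist (g t) x < 1" if "t0 < t" "t \<le> 1" for t
  proof (rule ccontr)
    assume "\<not> ?thesis"
    then have "t \<in> S" using that t0 unfolding S_def by auto
    then have "t \<le> t0" unfolding t0_def using bdd by (rule cSup_upper)
    then show False using that by simp
  qed
  have "?F t0 + csum (\<lambda>s t. dist (g s) (g t)) [t0, 1] \<le> ?F 1"
    by (rule af_super[OF r]) (use t0 in auto)
  then have meas: "measure ?M {t0<..1} \<ge> 1" using t0 g1 af_measure[OF r, of t0 1]
    by (simp add: dist_commute)
  have rho_props: "continuous_on UNIV \<rho>" "\<And>z. 0 \<le> \<rho> z" "\<And>z. \<rho> z \<le> 1"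
    unfolding \<rho>_def using eps by (auto intro!: continuous_on_exp continuous_on_mult continuous_on_const continuous_on_dist continuous_on_id continuous_on_minus)
  have "?c * 1 \<le> ?c * measure ?M {t0<..1}" using meas by (intro mult_left_mono) auto
  also have "\<dots> = integral\<^sup>L ?M (\<lambda>t. ?c * indicator {t0<..1} t)" by simp
  also have "\<dots> \<le> integral\<^sup>L ?M (\<lambda>t. indicator {0..1} t *\<^sub>R \<rho> (g t))"
  proof (rule integral_mono')
    show "integrable ?M (\<lambda>t. indicator {0..1} t *\<^sub>R \<rho> (g t))"
      by (rule line_integral_integrable[OF r rho_props])
    show "0 \<le> indicator {0..1} t *\<^sub>R \<rho> (g t)" for t using rho_props by (auto simp: indicator_def)
    show "?c * indicator {t0<..1} t \<le> indicator {0..1} t *\<^sub>R \<rho> (g t)" for t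
    proof (cases "t0 < t \<and> t \<le> 1")
      case True
      then have "dist (g t) x < 1" by (intro after) auto
      moreover have "dist p (g t) \<le> dist p x + dist (g t) x" by (simp add: dist_triangle dist_commute)
      ultimately have "dist p (g t) \<le> dist p x + 1" by simp
      then have "?c \<le> \<rho> (g t)" unfolding \<rho>_def using eps by simp
      then show ?thesis using True t0 by (auto simp: indicator_def)
    next
      case False
      then show ?thesis using rho_props by (auto simp: indicator_def)
    qed
  qed
  also have "\<dots> = line_integral \<rho> g" unfolding line_integral_def set_lebesgue_integral_def by simp
  finally show ?thesis unfolding \<rho>_def by simp
qed



lemma geo_dist:
  assumes "is_geodesic \<gamma> x y" "s \<in> {0..dist x y}" "t \<in> {0..dist x y}"
  shows "dist (\<gamma> s) (\<gamma> t) = \<bar>s - t\<bar>"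
  using assms unfolding is_geodesic_def by blast

lemma geo_cont:
  assumes "is_geodesic \<gamma> x y"
  shows "continuous_on {0..dist x y} \<gamma>"
  unfolding continuous_on_iff
proof (intro ballI allI impI)
  fix s e assume s: "s \<in> {0..dist x y}" and e: "(0::real) < e"
  show "\<exists>d>0. \<forall>s'\<in>{0..dist x y}. dist s' s < d \<longrightarrow> dist (\<gamma> s') (\<gamma> s) < e"
    using e geo_dist[OF assms _ s] by (intro exI[of _ e]) (auto simp: dist_real_def)
qed

lemma geo_csum:
  assumes "is_geodesic \<gamma> x y" "sorted ts" "set ts \<subseteq> {0..1}"
  shows "csum (\<lambda>s t. dist (\<gamma> (dist x y * s)) (\<gamma> (dist x y * t))) ts
          = (if ts = [] then 0 else dist x y * (last ts - hd ts))"
  using assms(2,3)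
proof (induction ts rule: induct_list012)
  case (3 a b zs)
  let ?L = "dist x y"
  have ab: "a \<le> b" "a \<in> {0..1}" "b \<in> {0..1}" using 3(3,4) by auto
  have "?L * a \<in> {0..?L}" "?L * b \<in> {0..?L}" using ab by (auto simp: mult_left_le)
  then have "dist (\<gamma> (?L * a)) (\<gamma> (?L * b)) = \<bar>?L * a - ?L * b\<bar>" by (rule geo_dist[OF assms(1)])
  also have "\<dots> = ?L * (b - a)" using mult_left_mono[OF ab(1) zero_le_dist[of x y]]
    by (simp add: abs_of_nonpos right_diff_distrib)
  finally show ?case using 3(2)[of] 3(3,4) by (simp add: right_diff_distrib)
qed auto

lemma geo_CL:
  assumes "is_geodesic \<gamma> x y" "0 \<le> t" "t \<le> 1"
  shows "curve_length_on dist (\<lambda>s. \<gamma> (dist x y * s)) 0 t = ereal (dist x y * t)"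
proof (rule antisym)
  let ?L = "dist x y"
  show "curve_length_on dist (\<lambda>s. \<gamma> (?L * s)) 0 t \<le> ereal (?L * t)"
  proof (rule CL_le)
    fix ts :: "real list" assume ts: "sorted ts" "set ts \<subseteq> {0..t}"
    then have "set ts \<subseteq> {0..1}" using assms by auto
    note eq = geo_csum[OF assms(1) ts(1) this]
    show "csum (\<lambda>s ta. dist (\<gamma> (?L * s)) (\<gamma> (?L * ta))) ts \<le> ?L * t"
    proof (cases "ts = []")
      case True then show ?thesis using eq assms by simp
    next
      case False
      have "last ts \<le> t" using ts(2) last_in_set[OF False] by auto
      moreover have "0 \<le> hd ts" using ts(2) hd_in_set[OF False] by auto
      ultimately have "last ts - hd ts \<le> t" by simp
      then show ?thesis using eq False by (simp add: mult_left_mono)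
    qed
  qed
  have "ereal (csum (\<lambda>s ta. dist (\<gamma> (?L * s)) (\<gamma> (?L * ta))) [0, t]) \<le> curve_length_on dist (\<lambda>s. \<gamma> (?L * s)) 0 t"
    by (rule CL_ge) (use assms in auto)
  moreover have "csum (\<lambda>s ta. dist (\<gamma> (?L * s)) (\<gamma> (?L * ta))) [0, t] = ?L * t"
    using geo_csum[OF assms(1), of "[0, t]"] assms by simp
  ultimately show "ereal (?L * t) \<le> curve_length_on dist (\<lambda>s. \<gamma> (?L * s)) 0 t" by simp
qed

lemma geo_path:
  assumes "is_geodesic \<gamma> x y"
  shows "path (\<lambda>s. \<gamma> (dist x y * s))"
  unfolding path_def
  by (rule continuous_on_compose2[OF geo_cont[OF assms]]) (auto intro!: continuous_intros simp: mult_left_le)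

lemma geo_rect:
  assumes "is_geodesic \<gamma> x y"
  shows "rectifiable (\<lambda>s. \<gamma> (dist x y * s))"
  unfolding rectifiable_def using geo_path[OF assms] geo_CL[OF assms, of 1] by simp

lemma geo_ends:
  assumes "is_geodesic \<gamma> x y"
  shows "pathstart (\<lambda>s. \<gamma> (dist x y * s)) = x" "pathfinish (\<lambda>s. \<gamma> (dist x y * s)) = y"
  using assms unfolding is_geodesic_def pathstart_def pathfinish_def by auto

lemma geo_af:
  assumes "is_geodesic \<gamma> x y"
  shows "arclength_fun (\<lambda>s. \<gamma> (dist x y * s)) = (\<lambda>t. dist x y * max 0 (min 1 t))"
proof
  fix t :: real
  show "arclength_fun (\<lambda>s. \<gamma> (dist x y * s)) t = dist x y * max 0 (min 1 t)"
  proof (cases "t < 0")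
    case True
    then show ?thesis using af_neg[OF geo_rect[OF assms] True] by simp
  next
    case False
    then have "curve_length_on dist (\<lambda>s. \<gamma> (dist x y * s)) 0 (min 1 t) = ereal (dist x y * min 1 t)"
      by (intro geo_CL[OF assms]) auto
    then show ?thesis using False unfolding arclength_fun_def by simp
  qed
qed



lemma Phi_mono: "L \<ge> 0 \<Longrightarrow> x \<le> y \<Longrightarrow> L * max 0 (min 1 x) \<le> L * max 0 (min 1 (y::real))"
  by (intro mult_left_mono) auto

lemma Phi_rcont: "continuous (at_right a) (\<lambda>t::real. L * max 0 (min 1 t))"
proof -
  have "continuous_on UNIV (\<lambda>t::real. L * max 0 (min 1 t))"
    by (intro continuous_on_mult continuous_on_const continuous_on_max continuous_on_min continuous_on_id)
  then have "isCont (\<lambda>t::real. L * max 0 (min 1 t)) a"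
    using continuous_on_eq_continuous_at open_UNIV by blast
  then show ?thesis by (rule continuous_at_imp_continuous_at_within)
qed

lemma Phi_emeasure_Ioi:
  assumes L: "L \<ge> 0"
  shows "emeasure (interval_measure (\<lambda>t. L * max 0 (min 1 t))) {x<..} = ennreal (L - L * max 0 (min 1 x))"
proof -
  let ?F = "\<lambda>t::real. L * max 0 (min 1 t)"
  let ?M = "interval_measure ?F"
  have Ioc: "emeasure ?M {a<..b} = ?F b - ?F a" if "a \<le> b" for a b
    by (rule emeasure_interval_measure_Ioc[OF that Phi_mono[OF L] Phi_rcont])
  define m where "m = max x 1"
  have U: "{m<..} = (\<Union>n. {m<..m + real n})"
  proof (intro equalityI subsetI)
    fix t assume t: "t \<in> {m<..}"
    obtain n :: nat where "t - m < real n" using reals_Archimedean2 by blast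
    with t have "t \<in> {m<..m + real n}" by auto
    then show "t \<in> (\<Union>n. {m<..m + real n})" by blast
  qed auto
  have "emeasure ?M {m<..} = emeasure ?M (\<Union>n. {m<..m + real n})" by (simp only: U)
  also have "\<dots> = 0"
  proof (rule emeasure_UN_eq_0)
    show "emeasure ?M {m<..m + real n} = 0" for n
      using Ioc[of m "m + real n"] unfolding m_def by auto
  qed auto
  finally have z: "emeasure ?M {m<..} = 0" .
  have "emeasure ?M {x<..} = emeasure ?M ({x<..m} \<union> {m<..})"
    unfolding m_def by (rule arg_cong[where f="emeasure ?M"]) auto
  also have "\<dots> = emeasure ?M {x<..m} + emeasure ?M {m<..}"
    by (rule plus_emeasure[symmetric]) auto
  also have "\<dots> = ennreal (?F m - ?F x)" using z Ioc[of x m] unfolding m_def by simp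
  also have "?F m = L" unfolding m_def by simp
  finally show ?thesis .
qed

lemma Phi_distr_Ioi:
  assumes L: "L \<ge> 0"
  shows "emeasure (distr (restrict_space lborel {0..L}) borel (\<lambda>s. s / L)) {x<..} = ennreal (L - L * max 0 (min 1 x))"
proof -
  have meas: "(\<lambda>s. s / L) \<in> measurable (restrict_space lborel {0..L}) borel"
    by (intro measurable_restrict_space1) simp
  have "emeasure (distr (restrict_space lborel {0..L}) borel (\<lambda>s. s / L)) {x<..}
      = emeasure (restrict_space lborel {0..L}) ((\<lambda>s. s / L) -` {x<..} \<inter> {0..L})"
    using emeasure_distr[OF meas, of "{x<..}"] by simp
  also have "\<dots> = emeasure lborel ((\<lambda>s. s / L) -` {x<..} \<inter> {0..L})"
    by (rule emeasure_restrict_space) auto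
  also have "\<dots> = ennreal (L - L * max 0 (min 1 x))"
  proof (cases "L = 0")
    case True
    have "emeasure lborel ((\<lambda>s. s / L) -` {x<..} \<inter> {0..L}) \<le> emeasure lborel {0..0::real}"
      using True by (intro emeasure_mono) auto
    then show ?thesis using True by simp
  next
    case False
    then have Lp: "L > 0" using L by simp
    consider "x < 0" | "0 \<le> x" "x \<le> 1" | "1 < x" by linarith
    then show ?thesis
    proof cases
      case 1
      then have "(\<lambda>s. s / L) -` {x<..} \<inter> {0..L} = {0..L}" using Lp
        by (auto simp: less_divide_eq) (smt (verit) mult_neg_pos)
      then show ?thesis using 1 L by simp
    next
      case 2
      then have "(\<lambda>s. s / L) -` {x<..} \<inter> {0..L} = {L * x<..L}" using Lp
        by (auto simp: less_divide_eq mult.commute) (smt (verit) mult_nonneg_nonneg)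
      moreover have "L * x \<le> L" using 2 Lp by (simp add: mult_left_le)
      ultimately show ?thesis using 2 by (simp add: right_diff_distrib)
    next
      case 3
      then have "(\<lambda>s. s / L) -` {x<..} \<inter> {0..L} = {}" using Lp
        by (auto simp: less_divide_eq mult.commute) (smt (verit) mult_less_cancel_left2)
      then show ?thesis using 3 by simp
    qed
  qed
  finally show ?thesis .
qed

lemma Phi_measure_eq:
  assumes L: "L \<ge> 0"
  shows "interval_measure (\<lambda>t. L * max 0 (min 1 t)) = distr (restrict_space lborel {0..L}) borel (\<lambda>s. s / L)"
  by (rule measure_eqI_lessThan) (auto simp: Phi_emeasure_Ioi[OF L] Phi_distr_Ioi[OF L])



lemma exp_abs_bound:
  fixes \<epsilon> w :: real assumes eps: "\<epsilon> > 0"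
  shows "exp (- \<epsilon> * \<bar>w\<bar>) \<le> 2 * exp (\<epsilon> * w) / (1 + (exp (\<epsilon> * w))\<^sup>2)"
proof -
  define E where "E = exp (\<epsilon> * w)"
  have E: "E > 0" unfolding E_def by simp
  have den: "1 + E\<^sup>2 > 0" by (simp add: add_pos_nonneg)
  show ?thesis
  proof (cases "w \<ge> 0")
    case True
    then have "exp (- \<epsilon> * \<bar>w\<bar>) = inverse E" unfolding E_def by (simp add: exp_minus)
    moreover have "1 \<le> E" unfolding E_def using True eps by simp
    then have "1 \<le> E\<^sup>2" by (simp add: one_le_power)
    then have "inverse E \<le> 2 * E / (1 + E\<^sup>2)" using E den
      by (simp add: field_simps power2_eq_square)
    ultimately show ?thesis unfolding E_def by simp
  next
    case False
    then have "exp (- \<epsilon> * \<bar>w\<bar>) = E" unfolding E_def by simp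
    moreover have "E \<le> 1" unfolding E_def using False eps mult_pos_neg[of \<epsilon> w] by simp
    then have "E\<^sup>2 \<le> 1" using E by (simp add: power_le_one)
    then have "E \<le> 2 * E / (1 + E\<^sup>2)" using E den by (simp add: field_simps)
    ultimately show ?thesis unfolding E_def by simp
  qed
qed

lemma G_deriv:
  fixes \<epsilon> c K s :: real assumes eps: "\<epsilon> > 0"
  shows "((\<lambda>s. K * (2 * arctan (exp (\<epsilon> * (s - c))) / \<epsilon>)) has_real_derivative
           K * (2 * exp (\<epsilon> * (s - c)) / (1 + (exp (\<epsilon> * (s - c)))\<^sup>2))) (at s within S)"
proof -
  have den: "1 + (exp (\<epsilon> * (s - c)))\<^sup>2 \<noteq> 0" by (metis add_pos_nonneg zero_le_power2 zero_less_one less_irrefl)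
  show ?thesis
  proof -
    have d2: "\<And>t. \<epsilon> * \<epsilon> + \<epsilon> * (\<epsilon> * (exp t)\<^sup>2) \<noteq> 0"
      using eps by (metis add_pos_nonneg mult_pos_pos mult_nonneg_nonneg zero_le_power2 less_imp_le less_irrefl)
    show ?thesis using eps den d2 by (auto intro!: derivative_eq_intros simp: field_simps)
  qed
qed

lemma h_cont:
  fixes \<epsilon> c K :: real
  shows "continuous_on S (\<lambda>s. K * (2 * exp (\<epsilon> * (s - c)) / (1 + (exp (\<epsilon> * (s - c)))\<^sup>2)))"
proof -
  have "\<forall>s\<in>S. 1 + (exp (\<epsilon> * (s - c)))\<^sup>2 \<noteq> 0"
    by (metis add_pos_nonneg zero_le_power2 zero_less_one less_irrefl)
  then show ?thesis
    by (intro continuous_on_mult continuous_on_const continuous_on_divide continuous_on_add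
        continuous_on_exp continuous_on_power continuous_on_diff continuous_on_id)
qed



lemma geo_pointwise:
  fixes \<gamma> :: "real \<Rightarrow> 'a::metric_space"
  assumes geo: "is_geodesic \<gamma> x y" and eps: "\<epsilon> > 0" and s: "0 \<le> s" "s \<le> dist x y"
  shows "exp (- \<epsilon> * dist p (\<gamma> s)) \<le> exp (- \<epsilon> * gromov_product p x y) *
     (2 * exp (\<epsilon> * (s - (dist p x - dist p y + dist x y) / 2)) / (1 + (exp (\<epsilon> * (s - (dist p x - dist p y + dist x y) / 2)))\<^sup>2))"
proof -
  let ?L = "dist x y"
  let ?c = "(dist p x - dist p y + dist x y) / 2"
  have g0: "\<gamma> 0 = x" and gL: "\<gamma> ?L = y" using geo unfolding is_geodesic_def by auto
  have "dist (\<gamma> 0) (\<gamma> s) = \<bar>0 - s\<bar>" by (rule geo_dist[OF geo]) (use s in auto)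
  then have d1: "dist x (\<gamma> s) = s" using g0 s by simp
  have "dist (\<gamma> s) (\<gamma> ?L) = \<bar>s - ?L\<bar>" by (rule geo_dist[OF geo]) (use s in auto)
  then have d2: "dist (\<gamma> s) y = ?L - s" using gL s by simp
  have "dist p x \<le> dist p (\<gamma> s) + dist (\<gamma> s) x" by (rule dist_triangle)
  then have t1: "dist p x - s \<le> dist p (\<gamma> s)" using d1 by (simp add: dist_commute)
  have "dist p y \<le> dist p (\<gamma> s) + dist (\<gamma> s) y" by (rule dist_triangle)
  then have t2: "dist p y - (?L - s) \<le> dist p (\<gamma> s)" using d2 by simp
  have key: "gromov_product p x y + \<bar>s - ?c\<bar> \<le> dist p (\<gamma> s)"
    using t1 t2 unfolding gromov_product_def by (auto simp: abs_if field_simps)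
  have "exp (- \<epsilon> * dist p (\<gamma> s)) \<le> exp (- \<epsilon> * (gromov_product p x y + \<bar>s - ?c\<bar>))"
    using key eps by simp
  also have "\<dots> = exp (- \<epsilon> * gromov_product p x y) * exp (- \<epsilon> * \<bar>s - ?c\<bar>)"
    by (simp add: distrib_left exp_add[symmetric])
  also have "\<dots> \<le> exp (- \<epsilon> * gromov_product p x y) * (2 * exp (\<epsilon> * (s - ?c)) / (1 + (exp (\<epsilon> * (s - ?c)))\<^sup>2))"
    by (intro mult_left_mono exp_abs_bound eps) simp
  finally show ?thesis .
qed

lemma arctan_aux:
  fixes A B \<epsilon> :: real
  assumes "A < pi / 2" "0 < B" "\<epsilon> > 0"
  shows "2 * A / \<epsilon> - 2 * B / \<epsilon> \<le> pi / \<epsilon>"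
proof -
  have "2 * A - 2 * B \<le> pi" using assms by linarith
  then have "(2 * A - 2 * B) / \<epsilon> \<le> pi / \<epsilon>" using assms(3) by (intro divide_right_mono) auto
  then show ?thesis by (simp add: diff_divide_distrib)
qed

lemma geo_line_integral_bound:
  fixes \<gamma> :: "real \<Rightarrow> 'a::metric_space"
  assumes geo: "is_geodesic \<gamma> x y" and eps: "\<epsilon> > 0"
  shows "line_integral (\<lambda>z. exp (- \<epsilon> * dist p z)) (\<lambda>s. \<gamma> (dist x y * s))
           \<le> exp (- \<epsilon> * gromov_product p x y) * (pi / \<epsilon>)"
proof -
  let ?L = "dist x y"
  let ?g = "\<lambda>s. \<gamma> (?L * s)"
  let ?c = "(dist p x - dist p y + dist x y) / 2"
  let ?K = "exp (- \<epsilon> * gromov_product p x y)"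
  define \<rho> where "\<rho> = (\<lambda>z. exp (- \<epsilon> * dist p z))"
  define h where "h = (\<lambda>s. ?K * (2 * exp (\<epsilon> * (s - ?c)) / (1 + (exp (\<epsilon> * (s - ?c)))\<^sup>2)))"
  define G where "G = (\<lambda>s. ?K * (2 * arctan (exp (\<epsilon> * (s - ?c))) / \<epsilon>))"
  have L0: "?L \<ge> 0" by simp
  have rho_cont: "continuous_on UNIV \<rho>" unfolding \<rho>_def
    by (intro continuous_on_exp continuous_on_mult continuous_on_const continuous_on_dist continuous_on_id continuous_on_minus)
  have gc: "continuous_on {0..1} ?g" using geo_path[OF geo] unfolding path_def .
  have cont1: "continuous_on {0..1} (\<lambda>t. \<rho> (?g t))"
    by (rule continuous_on_compose2[OF rho_cont gc]) auto
  have fmeas: "(\<lambda>t. indicator {0..1} t *\<^sub>R \<rho> (?g t)) \<in> borel_measurable borel"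
    by (intro borel_measurable_continuous_on_indicator cont1) auto
  have Tmeas: "(\<lambda>s. s / ?L) \<in> measurable (restrict_space lborel {0..?L}) borel"
    by (intro measurable_restrict_space1) simp
  have "line_integral \<rho> ?g = integral\<^sup>L (interval_measure (\<lambda>t. ?L * max 0 (min 1 t)))
            (\<lambda>t. indicator {0..1} t *\<^sub>R \<rho> (?g t))"
    unfolding line_integral_def set_lebesgue_integral_def geo_af[OF geo] ..
  also have "\<dots> = integral\<^sup>L (distr (restrict_space lborel {0..?L}) borel (\<lambda>s. s / ?L))
            (\<lambda>t. indicator {0..1} t *\<^sub>R \<rho> (?g t))"
    unfolding Phi_measure_eq[OF L0] ..
  also have "\<dots> = integral\<^sup>L (restrict_space lborel {0..?L}) (\<lambda>s. indicator {0..1} (s / ?L) *\<^sub>R \<rho> (?g (s / ?L)))"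
    by (rule integral_distr[OF Tmeas fmeas])
  also have "\<dots> = integral\<^sup>L lborel (\<lambda>s. indicator {0..?L} s *\<^sub>R (indicator {0..1} (s / ?L) *\<^sub>R \<rho> (?g (s / ?L))))"
    by (rule integral_restrict_space) auto
  also have "\<dots> \<le> integral\<^sup>L lborel (\<lambda>s. indicator {0..?L} s *\<^sub>R h s)"
  proof (rule integral_mono')
    have "set_integrable lborel {0..?L} h" unfolding h_def by (rule borel_integrable_atLeastAtMost'[OF h_cont])
    then show "integrable lborel (\<lambda>s. indicator {0..?L} s *\<^sub>R h s)" unfolding set_integrable_def .
    show "0 \<le> indicator {0..?L} s *\<^sub>R h s" for s
      unfolding h_def by (auto simp: indicator_def intro!: divide_nonneg_pos add_pos_nonneg)
    show "indicator {0..?L} s *\<^sub>R (indicator {0..1} (s / ?L) *\<^sub>R \<rho> (?g (s / ?L))) \<le> indicator {0..?L} s *\<^sub>R h s" for s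
    proof (cases "s \<in> {0..?L}")
      case True
      have gs: "?g (s / ?L) = \<gamma> s"
      proof (cases "?L = 0")
        case True
        then show ?thesis using \<open>s \<in> {0..?L}\<close> by simp
      qed simp
      have "\<rho> (\<gamma> s) \<le> h s" unfolding \<rho>_def h_def using geo_pointwise[OF geo eps, of s p] True by simp
      moreover have "indicator {0..1} (s / ?L) * \<rho> (\<gamma> s) \<le> \<rho> (\<gamma> s)"
        unfolding \<rho>_def by (auto simp: indicator_def)
      ultimately show ?thesis using True gs by simp
    next
      case False
      then show ?thesis by simp
    qed
  qed
  also have "\<dots> = (LBINT s:{0..?L}. h s)" unfolding set_lebesgue_integral_def ..
  also have "\<dots> = (LBINT s=ereal 0..ereal ?L. h s)" by (rule interval_integral_Icc[symmetric]) simp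
  also have "\<dots> = G ?L - G 0"
  proof (rule interval_integral_FTC_finite)
    show "continuous_on {min 0 ?L..max 0 ?L} h" unfolding h_def by (rule h_cont)
    show "(G has_vector_derivative h s) (at s within {min 0 ?L..max 0 ?L})" for s
      unfolding G_def h_def has_real_derivative_iff_has_vector_derivative[symmetric]
      by (rule G_deriv[OF eps])
  qed
  also have "\<dots> \<le> ?K * (pi / \<epsilon>)"
  proof -
    have a1: "arctan (exp (\<epsilon> * (?L - ?c))) < pi / 2" by (rule arctan_ubound)
    have a2: "0 < arctan (exp (\<epsilon> * (0 - ?c)))" by simp
    have "2 * arctan (exp (\<epsilon> * (?L - ?c))) / \<epsilon> - 2 * arctan (exp (\<epsilon> * (0 - ?c))) / \<epsilon> \<le> pi / \<epsilon>"
      using arctan_aux[OF a1 a2 eps] .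
    then have "?K * (2 * arctan (exp (\<epsilon> * (?L - ?c))) / \<epsilon> - 2 * arctan (exp (\<epsilon> * (0 - ?c))) / \<epsilon>) \<le> ?K * (pi / \<epsilon>)"
      by (intro mult_left_mono) auto
    then show ?thesis unfolding G_def by (simp add: right_diff_distrib)
  qed
  finally show ?thesis unfolding \<rho>_def .
qed



lemma line_integral_nonneg: "0 \<le> line_integral (\<lambda>z. exp (- \<epsilon> * dist p z)) g"
  unfolding line_integral_def set_lebesgue_integral_def
  by (rule Bochner_Integration.integral_nonneg) (auto simp: indicator_def)

lemma uniformized_le:
  fixes x y :: "'a::metric_space"
  assumes geo: "is_geodesic \<gamma> x y" and eps: "\<epsilon> > 0"
  shows "uniformized \<epsilon> p x y \<le> exp (- \<epsilon> * gromov_product p x y) * (pi / \<epsilon>)"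
proof -
  let ?C = "{g. rectifiable g \<and> pathstart g = x \<and> pathfinish g = y}"
  let ?f = "\<lambda>g. line_integral (\<lambda>z. exp (- \<epsilon> * dist p z)) g"
  have mem: "(\<lambda>s. \<gamma> (dist x y * s)) \<in> ?C" using geo_rect[OF geo] geo_ends[OF geo] by auto
  have "uniformized \<epsilon> p x y \<le> ?f (\<lambda>s. \<gamma> (dist x y * s))"
    unfolding uniformized_def
    by (rule cINF_lower[OF _ mem]) (intro bdd_belowI2[where m=0] line_integral_nonneg)
  also have "\<dots> \<le> exp (- \<epsilon> * gromov_product p x y) * (pi / \<epsilon>)"
    by (rule geo_line_integral_bound[OF geo eps])
  finally show ?thesis .
qed

lemma uniformized_ge:
  fixes u x :: "'a::metric_space"
  assumes geod: "geodesic_space TYPE('a)" and eps: "\<epsilon> > 0" and d: "dist u x \<ge> 1"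
  shows "exp (- \<epsilon> * (dist p x + 1)) \<le> uniformized \<epsilon> p u x"
proof -
  let ?C = "{g. rectifiable g \<and> pathstart g = u \<and> pathfinish g = x}"
  obtain \<gamma> where geo: "is_geodesic \<gamma> u x" using geod unfolding geodesic_space_def by blast
  have mem: "(\<lambda>s. \<gamma> (dist u x * s)) \<in> ?C" using geo_rect[OF geo] geo_ends[OF geo] by auto
  show ?thesis unfolding uniformized_def
  proof (rule cINF_greatest)
    show "?C \<noteq> {}" using mem by blast
    show "exp (- \<epsilon> * (dist p x + 1)) \<le> line_integral (\<lambda>z. exp (- \<epsilon> * dist p z)) g" if "g \<in> ?C" for g
      using that line_lower[of g u x \<epsilon> p] d eps by auto
  qed
qed

theorem lemma3p1:
  fixes \<delta> \<epsilon> :: real and p :: "'a::metric_space"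
  assumes "gromov_hyperbolic TYPE('a) \<delta>"
    and "\<epsilon> > 0"
    and "GH_metric_boundary \<epsilon> p"
  shows "GH_gromov_sequences \<epsilon> p"
  unfolding GH_gromov_sequences_def
proof (intro allI impI)
  fix xs :: "nat \<Rightarrow> 'a" assume gs: "gromov_sequence p xs"
  have geod: "geodesic_space TYPE('a)" using assms(1) unfolding gromov_hyperbolic_def by blast
  have eps: "\<epsilon> > 0" by (rule assms(2))
  have gp_self: "gromov_product p z z = dist p z" for z unfolding gromov_product_def by simp
  have cauchy: "\<exists>N. \<forall>n\<ge>N. \<forall>m\<ge>N. uniformized \<epsilon> p (xs n) (xs m) < e" if e: "e > 0" for e
  proof -
    define M where "M = - ln (e * \<epsilon> / pi) / \<epsilon> + 1"
    have "- \<epsilon> * M = ln (e * \<epsilon> / pi) - \<epsilon>" unfolding M_def using eps by (simp add: field_simps)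
    then have "exp (- \<epsilon> * M) = exp (ln (e * \<epsilon> / pi) - \<epsilon>)" by simp
    also have "\<dots> = (e * \<epsilon> / pi) / exp \<epsilon>" using e eps by (simp add: exp_diff)
    also have "\<dots> < e * \<epsilon> / pi" using e eps by (simp add: divide_less_eq)
    finally have eM: "exp (- \<epsilon> * M) * (pi / \<epsilon>) < e" using eps by (simp add: field_simps)
    obtain N where N: "\<forall>n\<ge>N. \<forall>m\<ge>N. gromov_product p (xs n) (xs m) \<ge> M"
      using gs unfolding gromov_sequence_def by blast
    show ?thesis
    proof (intro exI allI impI)
      fix n m assume nm: "N \<le> n" "N \<le> m"
      obtain \<gamma> where geo: "is_geodesic \<gamma> (xs n) (xs m)" using geod unfolding geodesic_space_def by blast
      have "uniformized \<epsilon> p (xs n) (xs m) \<le> exp (- \<epsilon> * gromov_product p (xs n) (xs m)) * (pi / \<epsilon>)"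
        by (rule uniformized_le[OF geo eps])
      also have "\<dots> \<le> exp (- \<epsilon> * M) * (pi / \<epsilon>)"
        using N nm eps by (intro mult_right_mono) auto
      also have "\<dots> < e" by (rule eM)
      finally show "uniformized \<epsilon> p (xs n) (xs m) < e" .
    qed
  qed
  have nolim: "\<not> (\<exists>x. (\<lambda>n. uniformized \<epsilon> p (xs n) x) \<longlonglongrightarrow> 0)"
  proof
    assume "\<exists>x. (\<lambda>n. uniformized \<epsilon> p (xs n) x) \<longlonglongrightarrow> 0"
    then obtain x where lim: "(\<lambda>n. uniformized \<epsilon> p (xs n) x) \<longlonglongrightarrow> 0" by blast
    let ?c = "exp (- \<epsilon> * (dist p x + 1))"
    have "?c > 0" by simp
    then have "eventually (\<lambda>n. uniformized \<epsilon> p (xs n) x < ?c) sequentially"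
      using order_tendstoD(2)[OF lim] by blast
    then obtain N1 where N1: "\<And>n. n \<ge> N1 \<Longrightarrow> uniformized \<epsilon> p (xs n) x < ?c"
      unfolding eventually_sequentially by blast
    obtain N2 where N2: "\<forall>n\<ge>N2. \<forall>m\<ge>N2. gromov_product p (xs n) (xs m) \<ge> dist p x + 1"
      using gs unfolding gromov_sequence_def by blast
    define n where "n = max N1 N2"
    have "N2 \<le> n" unfolding n_def by simp
    then have "gromov_product p (xs n) (xs n) \<ge> dist p x + 1" using N2 by blast
    then have "dist p (xs n) \<ge> dist p x + 1" using gp_self[of "xs n"] by simp
    moreover have "dist p (xs n) \<le> dist p x + dist x (xs n)" by (rule dist_triangle)
    ultimately have "dist (xs n) x \<ge> 1" by (simp add: dist_commute)
    then have "?c \<le> uniformized \<epsilon> p (xs n) x" by (rule uniformized_ge[OF geod eps])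
    moreover have "uniformized \<epsilon> p (xs n) x < ?c" using N1 unfolding n_def by simp
    ultimately show False by simp
  qed
  have "converges_to_metric_boundary \<epsilon> p xs"
    unfolding converges_to_metric_boundary_def using cauchy nolim by blast
  then show "\<exists>C\<ge>1. GH_bound \<epsilon> p xs C" using assms(3) unfolding GH_metric_boundary_def by blast
qed

end
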